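(* Let $P_1\subseteq P_2$ be meet semilattices with $0$ such that $P_1$ is downward closed in $P_2$. Then $P_1\subseteq P_2$ preserves finite covers and is tight; that is, the map $U\mapsto re^{-1}(U)$ identifies $\mathcal T_c(P_1)$ with an ideal of $\mathcal T_c(P_2)$, via $V^{P_1}_x\mapsto V^{P_2}_x$ for $x\in P_1$.
   Context: A meet semilattice with $0$ is a meet semilattice with least element $0$; $P_1\subseteq P_2$ means an injective meet- and $0$-preserving map identifying $P_1$ with a subset of $P_2$; downward closed means containing all elements below any of its elements. A filter of $P$ is a subset $F$ with $\emptyset\ne F\ne P$, closed upwards and under $\wedge$; $F(P)$ has the topology generated by $U_x=\{F:x\in F\}$, with basis of compact open sets $U_{(x:x_1,\dots,x_n)}=\{F:x\in F,\ x_1,\dots,x_n\notin F\}$. The tight filters $T(P)$ are the closure of the ultrafilters in $F(P)$; $V^P_{(x:x_1,\dots,x_n)}=U_{(x:x_1,\dots,x_n)}\cap T(P)$, $V^P_x=V^P_{(x:)}$. $\mathcal T_c(P)$ is the generalized Boolean algebra of compact open subsets of $T(P)$. A finite cover of $x\in P$ is a finite set of elements $\le x$ such that every $0\ne y\le x$ meets one of them nontrivially; $P_1\subseteq P_2$ preserves finite covers if every finite cover in $P_1$ of $x\in P_1$ is a finite cover of $x$ in $P_2$. In that case $re:T(P_2)\dashrightarrow T(P_1)$, $\xi\mapsto\xi\cap P_1$ (defined when nonempty), is a partial map to tight filters and $U\mapsto re^{-1}(U)$ is an injective generalized Boolean algebra morphism $\mathcal T_c(P_1)\to\mathcal T_c(P_2)$;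 $P_1\subseteq P_2$ is called tight if its image is an ideal (closed under unions and under intersection with arbitrary elements of $\mathcal T_c(P_2)$). *)

theory Defs
  imports "HOL-Analysis.Analysis"
begin

text \<open>A meet semilattice with 0 is represented as a carrier set P inside a type
  with meets and a least element, containing bot and closed under inf.\<close>

definition msl0 :: "'a::{semilattice_inf,order_bot} set \<Rightarrow> bool" where
  "msl0 P \<longleftrightarrow> bot \<in> P \<and> (\<forall>x\<in>P. \<forall>y\<in>P. inf x y \<in> P)"

definition down_closed :: "'a::order set \<Rightarrow> 'a set \<Rightarrow> bool" where
  "down_closed P1 P2 \<longleftrightarrow> (\<forall>x\<in>P1. \<forall>y\<in>P2. y \<le> x \<longrightarrow> y \<in> P1)"

definition is_filter :: "'a::semilattice_inf set \<Rightarrow> 'a set \<Rightarrow> bool" where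
  "is_filter P F \<longleftrightarrow> F \<subseteq> P \<and> F \<noteq> {} \<and> F \<noteq> P
     \<and> (\<forall>x\<in>F. \<forall>y\<in>P. x \<le> y \<longrightarrow> y \<in> F)
     \<and> (\<forall>x\<in>F. \<forall>y\<in>F. inf x y \<in> F)"

definition filters :: "'a::semilattice_inf set \<Rightarrow> 'a set set" where
  "filters P = {F. is_filter P F}"

definition Ubas :: "'a::semilattice_inf set \<Rightarrow> 'a \<Rightarrow> 'a set \<Rightarrow> 'a set set" where
  "Ubas P x xs = {F \<in> filters P. x \<in> F \<and> (\<forall>y\<in>xs. y \<notin> F)}"

definition FTop :: "'a::semilattice_inf set \<Rightarrow> 'a set topology" where
  "FTop P = subtopology
     (topology_generated_by {Ubas P x xs | x xs. x \<in> P \<and> finite xs \<and> xs \<subseteq> P})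
     (filters P)"

definition ultrafilters :: "'a::semilattice_inf set \<Rightarrow> 'a set set" where
  "ultrafilters P = {F \<in> filters P. \<forall>G\<in>filters P. F \<subseteq> G \<longrightarrow> G = F}"

definition tight :: "'a::semilattice_inf set \<Rightarrow> 'a set set" where
  "tight P = (FTop P) closure_of (ultrafilters P)"

definition TTop :: "'a::semilattice_inf set \<Rightarrow> 'a set topology" where
  "TTop P = subtopology (FTop P) (tight P)"

definition Vbas :: "'a::semilattice_inf set \<Rightarrow> 'a \<Rightarrow> 'a set \<Rightarrow> 'a set set" where
  "Vbas P x xs = Ubas P x xs \<inter> tight P"

definition Tc :: "'a::semilattice_inf set \<Rightarrow> 'a set set set" where
  "Tc P = {U. openin (TTop P) U \<and> compactin (TTop P) U}"

definition finite_cover :: "'a::{semilattice_inf,order_bot} set \<Rightarrow> 'a \<Rightarrow> 'a set \<Rightarrow> bool" where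
  "finite_cover P x C \<longleftrightarrow> finite C \<and> C \<subseteq> P \<and> (\<forall>c\<in>C. c \<le> x)
     \<and> (\<forall>y\<in>P. y \<noteq> bot \<and> y \<le> x \<longrightarrow> (\<exists>c\<in>C. inf y c \<noteq> bot))"

definition preserves_finite_covers :: "'a::{semilattice_inf,order_bot} set \<Rightarrow> 'a set \<Rightarrow> bool" where
  "preserves_finite_covers P1 P2 \<longleftrightarrow>
     (\<forall>x\<in>P1. \<forall>C. finite_cover P1 x C \<longrightarrow> finite_cover P2 x C)"

text \<open>Preimage of U under the partial map re : xi |-> xi \<inter> P1 (defined when nonempty).\<close>
definition re_pre :: "'a::semilattice_inf set \<Rightarrow> 'a set \<Rightarrow> 'a set set \<Rightarrow> 'a set set" where
  "re_pre P1 P2 U = {\<xi> \<in> tight P2. \<xi> \<inter> P1 \<noteq> {} \<and> \<xi> \<inter> P1 \<in> U}"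

definition tight_inclusion :: "'a::{semilattice_inf,order_bot} set \<Rightarrow> 'a set \<Rightarrow> bool" where
  "tight_inclusion P1 P2 \<longleftrightarrow>
     (\<forall>\<xi>\<in>tight P2. \<xi> \<inter> P1 \<noteq> {} \<longrightarrow> \<xi> \<inter> P1 \<in> tight P1)
   \<and> (\<forall>U\<in>Tc P1. re_pre P1 P2 U \<in> Tc P2)
   \<and> inj_on (re_pre P1 P2) (Tc P1)
   \<and> (\<forall>A\<in>re_pre P1 P2 ` Tc P1. \<forall>B\<in>re_pre P1 P2 ` Tc P1. A \<union> B \<in> re_pre P1 P2 ` Tc P1)
   \<and> (\<forall>A\<in>re_pre P1 P2 ` Tc P1. \<forall>W\<in>Tc P2. A \<inter> W \<in> re_pre P1 P2 ` Tc P1)"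

end

theory Submission imports Defs begin

definition Bas :: "'a::semilattice_inf set \<Rightarrow> 'a set set set" where
  "Bas P = {Ubas P x xs | x xs. x \<in> P \<and> finite xs \<and> xs \<subseteq> P}"

lemma FTop_eq: "FTop P = subtopology (topology_generated_by (Bas P)) (filters P)"
  by (simp add: FTop_def Bas_def)

lemma filter_nobot:
  assumes "msl0 P" "is_filter P F" shows "bot \<notin> F"
proof
  assume "bot \<in> F"
  then have "P \<subseteq> F" using assms unfolding is_filter_def by auto
  then show False using assms unfolding is_filter_def by auto
qed

lemma Ubas_sub: "Ubas P x xs \<subseteq> filters P" by (auto simp: Ubas_def)

lemma Ubas_Int:
  assumes "x \<in> P" "y \<in> P"
  shows "Ubas P x xs \<inter> Ubas P y ys = Ubas P (inf x y) (xs \<union> ys)"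
proof -
  have "x \<in> F \<and> y \<in> F \<longleftrightarrow> inf x y \<in> F" if "F \<in> filters P" for F
  proof
    assume "x \<in> F \<and> y \<in> F" then show "inf x y \<in> F" using that unfolding filters_def is_filter_def by blast
  next
    assume i: "inf x y \<in> F"
    have up: "\<forall>a\<in>F. \<forall>b\<in>P. a \<le> b \<longrightarrow> b \<in> F" using that unfolding filters_def is_filter_def by blast
    have "inf x y \<le> x" "inf x y \<le> y" by simp_all
    then show "x \<in> F \<and> y \<in> F" using up i assms by blast
  qed
  note h = this
  show ?thesis
  proof (rule set_eqI)
    fix F show "F \<in> Ubas P x xs \<inter> Ubas P y ys \<longleftrightarrow> F \<in> Ubas P (inf x y) (xs \<union> ys)"
    proof (cases "F \<in> filters P")
      case True
      then show ?thesis using h[OF True] unfolding Ubas_def by blast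
    next
      case False
      then show ?thesis unfolding Ubas_def by blast
    qed
  qed
qed

lemma gen_nbhd:
  assumes g: "generate_topology_on (Bas P) T"
  shows "\<forall>F\<in>T \<inter> filters P. \<exists>x xs. x\<in>P \<and> finite xs \<and> xs\<subseteq>P \<and> F \<in> Ubas P x xs \<and> Ubas P x xs \<subseteq> T"
  using g
proof induction
  case Empty then show ?case by simp
next
  case (Int a b)
  show ?case
  proof
    fix F assume F: "F \<in> a \<inter> b \<inter> filters P"
    from Int.IH(1) F obtain x xs where x: "x\<in>P" "finite xs" "xs\<subseteq>P" "F \<in> Ubas P x xs" "Ubas P x xs \<subseteq> a" by blast
    from Int.IH(2) F obtain y ys where y: "y\<in>P" "finite ys" "ys\<subseteq>P" "F \<in> Ubas P y ys" "Ubas P y ys \<subseteq> b" by blast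
    have F2: "F \<in> Ubas P (inf x y) (xs \<union> ys)" "Ubas P (inf x y) (xs \<union> ys) \<subseteq> a \<inter> b"
      using Ubas_Int[OF x(1) y(1), of xs ys] x(4,5) y(4,5) by blast+
    have "inf x y \<in> P" using F2(1) unfolding Ubas_def filters_def is_filter_def by blast
    note F2
    moreover have "finite (xs \<union> ys)" "xs \<union> ys \<subseteq> P" using x y by auto
    ultimately show "\<exists>x xs. x\<in>P \<and> finite xs \<and> xs\<subseteq>P \<and> F \<in> Ubas P x xs \<and> Ubas P x xs \<subseteq> a \<inter> b"
      using \<open>inf x y \<in> P\<close> by blast
  qed
next
  case (UN K)
  show ?case
  proof
    fix F assume "F \<in> \<Union>K \<inter> filters P"
    then obtain k where k: "k \<in> K" "F \<in> k \<inter> filters P" by blast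
    from UN.IH[OF k(1)] k(2) obtain x xs where "x\<in>P" "finite xs" "xs\<subseteq>P" "F \<in> Ubas P x xs" "Ubas P x xs \<subseteq> k" by blast
    then show "\<exists>x xs. x\<in>P \<and> finite xs \<and> xs\<subseteq>P \<and> F \<in> Ubas P x xs \<and> Ubas P x xs \<subseteq> \<Union>K" using k(1) by blast
  qed
next
  case (Basis s)
  then obtain x xs where "s = Ubas P x xs" "x\<in>P" "finite xs" "xs \<subseteq> P" unfolding Bas_def by blast
  then show ?case by blast
qed

lemma topspace_FTop: "topspace (FTop P) = filters P"
proof -
  have "filters P \<subseteq> \<Union>(Bas P)"
  proof
    fix F assume F: "F \<in> filters P"
    then obtain x where "x \<in> F" by (auto simp: filters_def is_filter_def)
    then have "F \<in> Ubas P x {}" "x \<in> P" using F by (auto simp: Ubas_def filters_def is_filter_def)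
    then show "F \<in> \<Union>(Bas P)" unfolding Bas_def by blast
  qed
  then show ?thesis unfolding FTop_eq by auto
qed

lemma openin_FTop_Ubas:
  assumes "x \<in> P" "finite xs" "xs \<subseteq> P" shows "openin (FTop P) (Ubas P x xs)"
proof -
  have "openin (topology_generated_by (Bas P)) (Ubas P x xs)"
    using assms by (intro topology_generated_by_Basis) (auto simp: Bas_def)
  then show ?thesis unfolding FTop_eq openin_subtopology using Ubas_sub by blast
qed

lemma tight_sub: "tight P \<subseteq> filters P"
  unfolding tight_def using closure_of_subset_topspace[of "FTop P" "ultrafilters P"] unfolding topspace_FTop .

lemma topspace_TTop: "topspace (TTop P) = tight P"
  unfolding TTop_def topspace_subtopology topspace_FTop using tight_sub by blast

lemma ultra_sub: "ultrafilters P \<subseteq> filters P" by (auto simp: ultrafilters_def)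

lemma tight_iff:
  "F \<in> tight P \<longleftrightarrow> F \<in> filters P \<and> (\<forall>x xs. x\<in>P \<and> finite xs \<and> xs\<subseteq>P \<and> F\<in>Ubas P x xs \<longrightarrow> Ubas P x xs \<inter> ultrafilters P \<noteq> {})"
proof
  assume F: "F \<in> tight P"
  then show "F \<in> filters P \<and> (\<forall>x xs. x\<in>P \<and> finite xs \<and> xs\<subseteq>P \<and> F\<in>Ubas P x xs \<longrightarrow> Ubas P x xs \<inter> ultrafilters P \<noteq> {})"
    unfolding tight_def in_closure_of topspace_FTop using openin_FTop_Ubas by blast
next
  assume F: "F \<in> filters P \<and> (\<forall>x xs. x\<in>P \<and> finite xs \<and> xs\<subseteq>P \<and> F\<in>Ubas P x xs \<longrightarrow> Ubas P x xs \<inter> ultrafilters P \<noteq> {})"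
  show "F \<in> tight P" unfolding tight_def in_closure_of topspace_FTop
  proof (intro conjI allI impI)
    show "F \<in> filters P" using F by blast
    fix T assume T: "F \<in> T \<and> openin (FTop P) T"
    then obtain T' where T': "openin (topology_generated_by (Bas P)) T'" "T = T' \<inter> filters P"
      unfolding FTop_eq openin_subtopology by blast
    from T'(1) have "generate_topology_on (Bas P) T'" by (rule openin_topology_generated_by)
    from gen_nbhd[OF this] T T' F obtain x xs where
      x: "x\<in>P" "finite xs" "xs\<subseteq>P" "F \<in> Ubas P x xs" "Ubas P x xs \<subseteq> T'" by blast
    then obtain y where "y \<in> Ubas P x xs" "y \<in> ultrafilters P" using F by blast
    then show "\<exists>y. y \<in> ultrafilters P \<and> y \<in> T" using x T' Ubas_sub by blast
  qed
qed

lemma openin_TTop_iff: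
  "openin (TTop P) W \<longleftrightarrow> W \<subseteq> tight P \<and> (\<forall>F\<in>W. \<exists>x xs. x\<in>P \<and> finite xs \<and> xs \<subseteq> P \<and> F \<in> Ubas P x xs \<and> Ubas P x xs \<inter> tight P \<subseteq> W)"
proof
  assume W: "openin (TTop P) W"
  have Ws: "W \<subseteq> tight P" using openin_subset[OF W] unfolding topspace_TTop .
  from W obtain T T' where T: "openin (topology_generated_by (Bas P)) T'" "T = T' \<inter> filters P" "W = T \<inter> tight P"
    unfolding TTop_def FTop_eq openin_subtopology by blast
  from T(1) have "generate_topology_on (Bas P) T'" by (rule openin_topology_generated_by)
  note g = gen_nbhd[OF this]
  show "W \<subseteq> tight P \<and> (\<forall>F\<in>W. \<exists>x xs. x\<in>P \<and> finite xs \<and> xs \<subseteq> P \<and> F \<in> Ubas P x xs \<and> Ubas P x xs \<inter> tight P \<subseteq> W)"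
  proof (intro conjI ballI Ws)
    fix F assume "F \<in> W"
    then have "F \<in> T' \<inter> filters P" using T by blast
    with g obtain x xs where x: "x\<in>P" "finite xs" "xs\<subseteq>P" "F \<in> Ubas P x xs" "Ubas P x xs \<subseteq> T'" by blast
    have "Ubas P x xs \<inter> tight P \<subseteq> W" using T x(5) Ubas_sub[of P x xs] by blast
    then show "\<exists>x xs. x\<in>P \<and> finite xs \<and> xs \<subseteq> P \<and> F \<in> Ubas P x xs \<and> Ubas P x xs \<inter> tight P \<subseteq> W"
      using x by blast
  qed
next
  assume W: "W \<subseteq> tight P \<and> (\<forall>F\<in>W. \<exists>x xs. x\<in>P \<and> finite xs \<and> xs \<subseteq> P \<and> F \<in> Ubas P x xs \<and> Ubas P x xs \<inter> tight P \<subseteq> W)"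
  define K where "K = {Ubas P x xs | x xs. x\<in>P \<and> finite xs \<and> xs \<subseteq> P \<and> Ubas P x xs \<inter> tight P \<subseteq> W}"
  have kB: "k \<in> Bas P" if "k \<in> K" for k using that unfolding K_def Bas_def by blast
  have gen: "generate_topology_on (Bas P) (\<Union>K)"
    by (rule generate_topology_on.UN, rule generate_topology_on.Basis, erule kB)
  have o: "openin (FTop P) (\<Union>K \<inter> filters P)"
    unfolding FTop_eq openin_subtopology openin_topology_generated_by_iff
    by (rule exI[of _ "\<Union>K"]) (simp add: gen)
  have "W = (\<Union>K \<inter> filters P) \<inter> tight P"
  proof
    show "W \<subseteq> (\<Union>K \<inter> filters P) \<inter> tight P"
    proof
      fix F assume F: "F \<in> W"
      then obtain x xs where x: "x\<in>P" "finite xs" "xs \<subseteq> P" "F \<in> Ubas P x xs" "Ubas P x xs \<inter> tight P \<subseteq> W"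
        using W by blast
      have "Ubas P x xs \<in> K" unfolding K_def using x by blast
      then have "F \<in> \<Union>K" using x(4) by blast
      moreover have "F \<in> tight P" using F W by blast
      ultimately show "F \<in> (\<Union>K \<inter> filters P) \<inter> tight P" using tight_sub by blast
    qed
  next
    show "(\<Union>K \<inter> filters P) \<inter> tight P \<subseteq> W"
    proof
      fix F assume F: "F \<in> (\<Union>K \<inter> filters P) \<inter> tight P"
      then obtain k where k: "k \<in> K" "F \<in> k" by blast
      then obtain x xs where "k = Ubas P x xs" "Ubas P x xs \<inter> tight P \<subseteq> W" unfolding K_def by blast
      then show "F \<in> W" using F k by blast
    qed
  qed
  then show "openin (TTop P) W" unfolding TTop_def openin_subtopology
    by (intro exI[of _ "\<Union>K \<inter> filters P"] conjI o)
qed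

lemma Hausdorff_TTop: "Hausdorff_space (TTop P)"
proof -
  have key: "\<exists>U V. openin (FTop P) U \<and> openin (FTop P) V \<and> F \<in> U \<and> G \<in> V \<and> disjnt U V"
    if F: "F \<in> filters P" and G: "G \<in> filters P" and y: "y \<in> F" "y \<notin> G" for F G y
  proof -
    obtain z where z: "z \<in> G" using G unfolding filters_def is_filter_def by blast
    have yP: "y \<in> P" "z \<in> P" using F G y z unfolding filters_def is_filter_def by blast+
    have o: "openin (FTop P) (Ubas P y {})" "openin (FTop P) (Ubas P z {y})"
      using openin_FTop_Ubas[of y P "{}"] openin_FTop_Ubas[of z P "{y}"] yP by auto
    have m: "F \<in> Ubas P y {}" "G \<in> Ubas P z {y}" using F G y z unfolding Ubas_def by blast+
    have d: "disjnt (Ubas P y {}) (Ubas P z {y})" unfolding disjnt_def Ubas_def by blast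
    show ?thesis using o m d by blast
  qed
  have "Hausdorff_space (FTop P)"
    unfolding Hausdorff_space_def topspace_FTop
  proof (intro allI impI)
    fix F G assume a: "F \<in> filters P \<and> G \<in> filters P \<and> F \<noteq> G"
    then obtain y where "(y \<in> F \<and> y \<notin> G) \<or> (y \<in> G \<and> y \<notin> F)" by blast
    then show "\<exists>U V. openin (FTop P) U \<and> openin (FTop P) V \<and> F \<in> U \<and> G \<in> V \<and> disjnt U V"
    proof
      assume "y \<in> F \<and> y \<notin> G" then show ?thesis using key[of F G y] a by blast
    next
      assume "y \<in> G \<and> y \<notin> F"
      then obtain U V where "openin (FTop P) U" "openin (FTop P) V" "G \<in> U" "F \<in> V" "disjnt U V"
        using key[of G F y] a by blast
      then show ?thesis using disjnt_sym by blast
    qed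
  qed
  then show ?thesis unfolding TTop_def by (rule Hausdorff_space_subtopology)
qed

locale incl =
  fixes P1 P2 :: "'a::{semilattice_inf,order_bot} set"
  assumes m1: "msl0 P1" and m2: "msl0 P2" and sub: "P1 \<subseteq> P2" and dc: "down_closed P1 P2"
begin

definition up :: "'a set \<Rightarrow> 'a set" where "up \<eta> = {y\<in>P2. \<exists>x\<in>\<eta>. x \<le> y}"

lemma dcI: "x \<in> P1 \<Longrightarrow> y \<in> P2 \<Longrightarrow> y \<le> x \<Longrightarrow> y \<in> P1"
  using dc by (auto simp: down_closed_def)

lemma res_filter:
  assumes F: "F \<in> filters P2" and ne: "F \<inter> P1 \<noteq> {}" shows "F \<inter> P1 \<in> filters P1"
proof -
  have "bot \<notin> F" using filter_nobot[OF m2] F by (auto simp: filters_def)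
  moreover have "bot \<in> P1" using m1 by (auto simp: msl0_def)
  ultimately have "F \<inter> P1 \<noteq> P1" by blast
  moreover have "\<forall>x\<in>F \<inter> P1. \<forall>y\<in>P1. x \<le> y \<longrightarrow> y \<in> F \<inter> P1"
    using F sub unfolding filters_def is_filter_def by blast
  moreover have "\<forall>x\<in>F \<inter> P1. \<forall>y\<in>F \<inter> P1. inf x y \<in> F \<inter> P1"
    using F m1 unfolding filters_def is_filter_def msl0_def by blast
  ultimately show ?thesis using ne unfolding filters_def is_filter_def by blast
qed

lemma up_filter:
  assumes E: "E \<in> filters P1" shows "up E \<in> filters P2"
proof -
  have Es: "E \<subseteq> P1" "E \<noteq> {}" using E by (auto simp: filters_def is_filter_def)
  have nb: "bot \<notin> E" using filter_nobot[OF m1] E by (auto simp: filters_def)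
  have "bot \<notin> up E" using nb by (auto simp: up_def bot_unique)
  moreover have "bot \<in> P2" using m2 by (auto simp: msl0_def)
  moreover have "up E \<noteq> {}" using Es sub by (auto simp: up_def)
  moreover have "\<forall>x\<in>up E. \<forall>y\<in>up E. inf x y \<in> up E"
  proof (intro ballI)
    fix a b assume a: "a \<in> up E" and b: "b \<in> up E"
    then obtain x1 x2 where "x1 \<in> E" "x2 \<in> E" "x1 \<le> a" "x2 \<le> b" by (auto simp: up_def)
    moreover have "inf a b \<in> P2" using a b m2 by (auto simp: up_def msl0_def)
    moreover have "inf x1 x2 \<in> E" using E \<open>x1 \<in> E\<close> \<open>x2 \<in> E\<close> by (auto simp: filters_def is_filter_def)
    moreover have "inf x1 x2 \<le> inf a b" using \<open>x1 \<le> a\<close> \<open>x2 \<le> b\<close> by (rule inf_mono)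
    ultimately show "inf a b \<in> up E" unfolding up_def by blast
  qed
  moreover have "\<forall>x\<in>up E. \<forall>y\<in>P2. x \<le> y \<longrightarrow> y \<in> up E"
    unfolding up_def by (blast intro: order_trans)
  moreover have "up E \<subseteq> P2" unfolding up_def by blast
  ultimately show ?thesis unfolding filters_def is_filter_def by blast
qed

lemma up_res: assumes E: "E \<in> filters P1" shows "up E \<inter> P1 = E"
proof
  show "E \<subseteq> up E \<inter> P1" using E sub by (auto simp: up_def filters_def is_filter_def)
  show "up E \<inter> P1 \<subseteq> E" using E by (auto simp: up_def filters_def is_filter_def)
qed

lemma res_up: assumes F: "F \<in> filters P2" and ne: "F \<inter> P1 \<noteq> {}" shows "up (F \<inter> P1) = F"
proof
  show "up (F \<inter> P1) \<subseteq> F" using F by (auto simp: up_def filters_def is_filter_def)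
  show "F \<subseteq> up (F \<inter> P1)"
  proof
    fix y assume y: "y \<in> F"
    obtain x where x: "x \<in> F" "x \<in> P1" using ne by blast
    have i: "inf x y \<in> F" using F x y by (auto simp: filters_def is_filter_def)
    then have "inf x y \<in> P1" using dcI[OF x(2)] F by (auto simp: filters_def is_filter_def)
    moreover have "inf x y \<le> y" by simp
    moreover have "y \<in> P2" using y F unfolding filters_def is_filter_def by blast
    ultimately show "y \<in> up (F \<inter> P1)" using i unfolding up_def by blast
  qed
qed

lemma up_ultra: assumes E: "E \<in> ultrafilters P1" shows "up E \<in> ultrafilters P2"
proof -
  have Ef: "E \<in> filters P1" using E by (auto simp: ultrafilters_def)
  have "G = up E" if G: "G \<in> filters P2" "up E \<subseteq> G" for G
  proof -
    have "E \<subseteq> G \<inter> P1" using up_res[OF Ef] G by blast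
    moreover have "E \<noteq> {}" using Ef by (auto simp: filters_def is_filter_def)
    ultimately have ne: "G \<inter> P1 \<noteq> {}" by blast
    have "G \<inter> P1 = E" using E res_filter[OF G(1) ne] \<open>E \<subseteq> G \<inter> P1\<close> by (auto simp: ultrafilters_def)
    then show ?thesis using res_up[OF G(1) ne] by simp
  qed
  then show ?thesis using up_filter[OF Ef] by (auto simp: ultrafilters_def)
qed

lemma res_ultra: assumes F: "F \<in> ultrafilters P2" and ne: "F \<inter> P1 \<noteq> {}"
  shows "F \<inter> P1 \<in> ultrafilters P1"
proof -
  have Ff: "F \<in> filters P2" using F by (auto simp: ultrafilters_def)
  have "G = F \<inter> P1" if G: "G \<in> filters P1" "F \<inter> P1 \<subseteq> G" for G
  proof -
    have "F \<subseteq> up G" using res_up[OF Ff ne] G(2) unfolding up_def by blast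
    then have "up G = F" using F up_filter[OF G(1)] by (auto simp: ultrafilters_def)
    then show ?thesis using up_res[OF G(1)] by simp
  qed
  then show ?thesis using res_filter[OF Ff ne] by (auto simp: ultrafilters_def)
qed

lemma res_Ubas:
  assumes F: "F \<in> filters P2" and x: "x \<in> P1" and xs: "xs \<subseteq> P1"
  shows "F \<in> Ubas P2 x xs \<longleftrightarrow> F \<inter> P1 \<noteq> {} \<and> F \<inter> P1 \<in> Ubas P1 x xs"
proof
  assume a: "F \<in> Ubas P2 x xs"
  then have ne: "F \<inter> P1 \<noteq> {}" using x by (auto simp: Ubas_def)
  show "F \<inter> P1 \<noteq> {} \<and> F \<inter> P1 \<in> Ubas P1 x xs" using a ne res_filter[OF F ne] x xs
    by (auto simp: Ubas_def)
next
  assume "F \<inter> P1 \<noteq> {} \<and> F \<inter> P1 \<in> Ubas P1 x xs"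
  then show "F \<in> Ubas P2 x xs" using F xs by (auto simp: Ubas_def)
qed

lemma up_Ubas:
  assumes E: "E \<in> filters P1" and y: "y \<in> P2" and ys: "finite ys" "ys \<subseteq> P2"
    and u: "up E \<in> Ubas P2 y ys"
  shows "\<exists>x. x \<in> P1 \<and> finite (inf x ` ys) \<and> inf x ` ys \<subseteq> P1 \<and> E \<in> Ubas P1 x (inf x ` ys) \<and>
    (\<forall>E'\<in>filters P1. E' \<in> Ubas P1 x (inf x ` ys) \<longrightarrow> up E' \<in> Ubas P2 y ys)"
proof -
  obtain x where x: "x \<in> E" "x \<le> y" using u by (auto simp: Ubas_def up_def)
  have xP: "x \<in> P1" using x E by (auto simp: filters_def is_filter_def)
  have ysP: "inf x ` ys \<subseteq> P1"
  proof
    fix v assume "v \<in> inf x ` ys"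
    then obtain w where w: "w \<in> ys" "v = inf x w" by blast
    have "inf x w \<in> P2" using m2 xP sub w ys by (auto simp: msl0_def)
    then show "v \<in> P1" using dcI[OF xP] w by auto
  qed
  have nE: "inf x w \<notin> E" if w: "w \<in> ys" for w
  proof
    assume "inf x w \<in> E"
    then have "w \<in> up E" using w ys unfolding up_def by (auto intro!: bexI[of _ "inf x w"])
    then show False using u w by (auto simp: Ubas_def)
  qed
  have "E \<in> Ubas P1 x (inf x ` ys)" using E x nE by (auto simp: Ubas_def)
  moreover have "up E' \<in> Ubas P2 y ys" if E': "E' \<in> filters P1" "E' \<in> Ubas P1 x (inf x ` ys)" for E'
  proof -
    have "y \<in> up E'" using E' x y by (auto simp: up_def Ubas_def)
    moreover have "w \<notin> up E'" if w: "w \<in> ys" for w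
    proof
      assume "w \<in> up E'"
      then obtain x' where x': "x' \<in> E'" "x' \<le> w" by (auto simp: up_def)
      have xE': "x \<in> E'" using E' by (auto simp: Ubas_def)
      have "inf x x' \<in> E'" using E' xE' x' by (auto simp: filters_def is_filter_def)
      moreover have "inf x x' \<le> inf x w" using x' by (simp add: le_infI2)
      moreover have "inf x w \<in> P1" using ysP w by blast
      ultimately have "inf x w \<in> E'" using E' unfolding filters_def is_filter_def by blast
      then show False using E' w by (auto simp: Ubas_def)
    qed
    ultimately show ?thesis using up_filter[OF E'(1)] by (auto simp: Ubas_def)
  qed
  ultimately show ?thesis using xP ysP ys by blast
qed

lemma up_tight: assumes E: "E \<in> tight P1" shows "up E \<in> tight P2"
proof -
  have Ef: "E \<in> filters P1" using E tight_sub by blast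
  show ?thesis unfolding tight_iff[of _ P2]
  proof (intro conjI allI impI)
    show "up E \<in> filters P2" using up_filter[OF Ef] .
    fix y ys assume a: "y \<in> P2 \<and> finite ys \<and> ys \<subseteq> P2 \<and> up E \<in> Ubas P2 y ys"
    then obtain x where x: "x \<in> P1" "finite (inf x ` ys)" "inf x ` ys \<subseteq> P1" "E \<in> Ubas P1 x (inf x ` ys)"
       "\<forall>E'\<in>filters P1. E' \<in> Ubas P1 x (inf x ` ys) \<longrightarrow> up E' \<in> Ubas P2 y ys"
      using up_Ubas[OF Ef] by blast
    then obtain V where V: "V \<in> Ubas P1 x (inf x ` ys)" "V \<in> ultrafilters P1"
      using E unfolding tight_iff[of _ P1] by blast
    then have "up V \<in> Ubas P2 y ys" "up V \<in> ultrafilters P2" using x(5) ultra_sub up_ultra by blast+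
    then show "Ubas P2 y ys \<inter> ultrafilters P2 \<noteq> {}" by blast
  qed
qed

lemma res_tight: assumes F: "F \<in> tight P2" and ne: "F \<inter> P1 \<noteq> {}" shows "F \<inter> P1 \<in> tight P1"
proof -
  have Ff: "F \<in> filters P2" using F tight_sub by blast
  show ?thesis unfolding tight_iff[of _ P1]
  proof (intro conjI allI impI)
    show "F \<inter> P1 \<in> filters P1" using res_filter[OF Ff ne] .
    fix x xs assume a: "x \<in> P1 \<and> finite xs \<and> xs \<subseteq> P1 \<and> F \<inter> P1 \<in> Ubas P1 x xs"
    then have "F \<in> Ubas P2 x xs" using res_Ubas[OF Ff] ne by blast
    moreover have "x \<in> P2" "xs \<subseteq> P2" using a sub by auto
    ultimately obtain U where U: "U \<in> Ubas P2 x xs" "U \<in> ultrafilters P2"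
      using F a unfolding tight_iff[of _ P2] by blast
    have Uf: "U \<in> filters P2" using U ultra_sub by blast
    have "U \<inter> P1 \<noteq> {} \<and> U \<inter> P1 \<in> Ubas P1 x xs" using res_Ubas[OF Uf] a U by blast
    moreover then have "U \<inter> P1 \<in> ultrafilters P1" using res_ultra U by blast
    ultimately show "Ubas P1 x xs \<inter> ultrafilters P1 \<noteq> {}" by blast
  qed
qed


lemma re_pre_eq: assumes "U \<subseteq> tight P1" shows "re_pre P1 P2 U = up ` U"
proof
  show "re_pre P1 P2 U \<subseteq> up ` U"
  proof
    fix \<xi> assume a: "\<xi> \<in> re_pre P1 P2 U"
    then have t: "\<xi> \<in> tight P2" "\<xi> \<inter> P1 \<noteq> {}" "\<xi> \<inter> P1 \<in> U" unfolding re_pre_def by blast+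
    have "\<xi> \<in> filters P2" using t(1) tight_sub by blast
    then have "\<xi> = up (\<xi> \<inter> P1)" using res_up t(2) by simp
    then show "\<xi> \<in> up ` U" using t(3) by blast
  qed
  show "up ` U \<subseteq> re_pre P1 P2 U"
  proof
    fix \<xi> assume "\<xi> \<in> up ` U"
    then obtain E where E: "E \<in> U" "\<xi> = up E" by blast
    have Et: "E \<in> tight P1" using E assms by blast
    have Ef: "E \<in> filters P1" using Et tight_sub by blast
    have "up E \<inter> P1 = E" by (rule up_res[OF Ef])
    moreover have "E \<noteq> {}" using Ef unfolding filters_def is_filter_def by blast
    moreover have "up E \<in> tight P2" by (rule up_tight[OF Et])
    ultimately show "\<xi> \<in> re_pre P1 P2 U" unfolding re_pre_def using E by simp
  qed
qed

lemma re_pre_open: assumes U: "openin (TTop P1) U" shows "openin (TTop P2) (re_pre P1 P2 U)"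
  unfolding openin_TTop_iff[of P2]
proof (intro conjI ballI)
  show "re_pre P1 P2 U \<subseteq> tight P2" unfolding re_pre_def by blast
  fix \<xi> assume a: "\<xi> \<in> re_pre P1 P2 U"
  then have t: "\<xi> \<in> tight P2" "\<xi> \<inter> P1 \<noteq> {}" "\<xi> \<inter> P1 \<in> U" unfolding re_pre_def by blast+
  have \<xi>f: "\<xi> \<in> filters P2" using t(1) tight_sub by blast
  obtain x xs where x: "x\<in>P1" "finite xs" "xs \<subseteq> P1" "\<xi> \<inter> P1 \<in> Ubas P1 x xs" "Ubas P1 x xs \<inter> tight P1 \<subseteq> U"
    using U t(3) unfolding openin_TTop_iff[of P1] by blast
  have "\<xi> \<in> Ubas P2 x xs" using res_Ubas[OF \<xi>f x(1) x(3)] t(2) x(4) by blast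
  moreover have "Ubas P2 x xs \<inter> tight P2 \<subseteq> re_pre P1 P2 U"
  proof
    fix \<zeta> assume z: "\<zeta> \<in> Ubas P2 x xs \<inter> tight P2"
    have zf: "\<zeta> \<in> filters P2" using z tight_sub by blast
    have r: "\<zeta> \<inter> P1 \<noteq> {}" "\<zeta> \<inter> P1 \<in> Ubas P1 x xs" using res_Ubas[OF zf x(1) x(3)] z by blast+
    have "\<zeta> \<inter> P1 \<in> tight P1" using res_tight[OF _ r(1)] z by blast
    then have "\<zeta> \<inter> P1 \<in> U" using r(2) x(5) by blast
    then show "\<zeta> \<in> re_pre P1 P2 U" unfolding re_pre_def using z r(1) by blast
  qed
  moreover have "x \<in> P2" "xs \<subseteq> P2" using x sub by blast+
  ultimately show "\<exists>x xs. x\<in>P2 \<and> finite xs \<and> xs \<subseteq> P2 \<and> \<xi> \<in> Ubas P2 x xs \<and> Ubas P2 x xs \<inter> tight P2 \<subseteq> re_pre P1 P2 U"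
    using x(2) by blast
qed

lemma up_cont: "continuous_map (TTop P1) (TTop P2) up"
  unfolding continuous_map topspace_TTop
proof (intro conjI allI impI)
  show "up ` tight P1 \<subseteq> tight P2" using up_tight by blast
  fix W assume W: "openin (TTop P2) W"
  show "openin (TTop P1) {E \<in> tight P1. up E \<in> W}"
    unfolding openin_TTop_iff[of P1]
  proof (intro conjI ballI)
    show "{E \<in> tight P1. up E \<in> W} \<subseteq> tight P1" by blast
    fix E assume E: "E \<in> {E \<in> tight P1. up E \<in> W}"
    then have Et: "E \<in> tight P1" "up E \<in> W" by blast+
    have Ef: "E \<in> filters P1" using Et(1) tight_sub by blast
    obtain y ys where y: "y\<in>P2" "finite ys" "ys \<subseteq> P2" "up E \<in> Ubas P2 y ys" "Ubas P2 y ys \<inter> tight P2 \<subseteq> W"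
      using W Et(2) unfolding openin_TTop_iff[of P2] by blast
    obtain x where x: "x \<in> P1" "finite (inf x ` ys)" "inf x ` ys \<subseteq> P1" "E \<in> Ubas P1 x (inf x ` ys)"
       "\<forall>E'\<in>filters P1. E' \<in> Ubas P1 x (inf x ` ys) \<longrightarrow> up E' \<in> Ubas P2 y ys"
      using up_Ubas[OF Ef y(1) y(2) y(3) y(4)] by blast
    have "Ubas P1 x (inf x ` ys) \<inter> tight P1 \<subseteq> {E \<in> tight P1. up E \<in> W}"
    proof
      fix E' assume E': "E' \<in> Ubas P1 x (inf x ` ys) \<inter> tight P1"
      have "E' \<in> filters P1" using E' tight_sub by blast
      then have "up E' \<in> Ubas P2 y ys" using x(5) E' by blast
      moreover have "up E' \<in> tight P2" using up_tight E' by blast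
      ultimately show "E' \<in> {E \<in> tight P1. up E \<in> W}" using y(5) E' by blast
    qed
    then show "\<exists>x' xs. x'\<in>P1 \<and> finite xs \<and> xs \<subseteq> P1 \<and> E \<in> Ubas P1 x' xs \<and> Ubas P1 x' xs \<inter> tight P1 \<subseteq> {E \<in> tight P1. up E \<in> W}"
      using x(1-4) by blast
  qed
qed

lemma res_open:
  assumes A: "openin (TTop P2) A" and AO: "A \<subseteq> {\<xi>. \<xi> \<inter> P1 \<noteq> {}}"
  shows "openin (TTop P1) ((\<lambda>\<xi>. \<xi> \<inter> P1) ` A)"
proof -
  have At: "A \<subseteq> tight P2" using A unfolding openin_TTop_iff[of P2] by blast
  show ?thesis unfolding openin_TTop_iff[of P1]
  proof (intro conjI ballI)
    show "(\<lambda>\<xi>. \<xi> \<inter> P1) ` A \<subseteq> tight P1" using res_tight At AO by blast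
    fix E assume "E \<in> (\<lambda>\<xi>. \<xi> \<inter> P1) ` A"
    then obtain \<xi> where \<xi>: "\<xi> \<in> A" "E = \<xi> \<inter> P1" by blast
    have \<xi>t: "\<xi> \<in> tight P2" using At \<xi>(1) by blast
    have \<xi>f: "\<xi> \<in> filters P2" using \<xi>t tight_sub by blast
    have ne: "\<xi> \<inter> P1 \<noteq> {}" using AO \<xi>(1) by blast
    have Ef: "E \<in> filters P1" using res_filter[OF \<xi>f ne] \<xi>(2) by simp
    have upE: "up E = \<xi>" using res_up[OF \<xi>f ne] \<xi>(2) by simp
    obtain y ys where y: "y\<in>P2" "finite ys" "ys \<subseteq> P2" "\<xi> \<in> Ubas P2 y ys" "Ubas P2 y ys \<inter> tight P2 \<subseteq> A"
      using A \<xi>(1) unfolding openin_TTop_iff[of P2] by blast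
    have "up E \<in> Ubas P2 y ys" using y(4) upE by simp
    then obtain x where x: "x \<in> P1" "finite (inf x ` ys)" "inf x ` ys \<subseteq> P1" "E \<in> Ubas P1 x (inf x ` ys)"
       "\<forall>E'\<in>filters P1. E' \<in> Ubas P1 x (inf x ` ys) \<longrightarrow> up E' \<in> Ubas P2 y ys"
      using up_Ubas[OF Ef y(1) y(2) y(3)] by blast
    have "Ubas P1 x (inf x ` ys) \<inter> tight P1 \<subseteq> (\<lambda>\<xi>. \<xi> \<inter> P1) ` A"
    proof
      fix E' assume E': "E' \<in> Ubas P1 x (inf x ` ys) \<inter> tight P1"
      have E'f: "E' \<in> filters P1" using E' tight_sub by blast
      then have "up E' \<in> Ubas P2 y ys" using x(5) E' by blast
      moreover have "up E' \<in> tight P2" using up_tight E' by blast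
      ultimately have uA: "up E' \<in> A" using y(5) by blast
      have "E' = up E' \<inter> P1" using up_res[OF E'f] by simp
      then show "E' \<in> (\<lambda>\<xi>. \<xi> \<inter> P1) ` A" using uA by (rule image_eqI)
    qed
    then show "\<exists>x' xs. x'\<in>P1 \<and> finite xs \<and> xs \<subseteq> P1 \<and> E \<in> Ubas P1 x' xs \<and> Ubas P1 x' xs \<inter> tight P1 \<subseteq> (\<lambda>\<xi>. \<xi> \<inter> P1) ` A"
      using x(1-4) by blast
  qed
qed

lemma res_cont: "continuous_map (subtopology (TTop P2) {\<xi>. \<xi> \<inter> P1 \<noteq> {}}) (TTop P1) (\<lambda>\<xi>. \<xi> \<inter> P1)"
  unfolding continuous_map
proof (intro conjI allI impI)
  show "(\<lambda>\<xi>. \<xi> \<inter> P1) ` topspace (subtopology (TTop P2) {\<xi>. \<xi> \<inter> P1 \<noteq> {}}) \<subseteq> topspace (TTop P1)"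
    unfolding topspace_subtopology topspace_TTop using res_tight by blast
  fix W assume W: "openin (TTop P1) W"
  have Wt: "W \<subseteq> tight P1" using openin_subset[OF W] unfolding topspace_TTop .
  have e: "{x \<in> topspace (subtopology (TTop P2) {\<xi>. \<xi> \<inter> P1 \<noteq> {}}). x \<inter> P1 \<in> W} = re_pre P1 P2 W"
    unfolding re_pre_def topspace_subtopology topspace_TTop by blast
  have "re_pre P1 P2 W \<subseteq> {\<xi>. \<xi> \<inter> P1 \<noteq> {}}" unfolding re_pre_def by blast
  then have "openin (subtopology (TTop P2) {\<xi>. \<xi> \<inter> P1 \<noteq> {}}) (re_pre P1 P2 W)"
    using subset_openin_subtopology[OF re_pre_open[OF W]] by blast
  then show "openin (subtopology (TTop P2) {\<xi>. \<xi> \<inter> P1 \<noteq> {}}) {x \<in> topspace (subtopology (TTop P2) {\<xi>. \<xi> \<inter> P1 \<noteq> {}}). x \<inter> P1 \<in> W}"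
    unfolding e .
qed

lemma Tc_sub: "U \<in> Tc P \<Longrightarrow> U \<subseteq> tight P"
  unfolding Tc_def using openin_subset topspace_TTop by blast

lemma Tc_map: assumes U: "U \<in> Tc P1" shows "re_pre P1 P2 U \<in> Tc P2"
proof -
  have o: "openin (TTop P1) U" "compactin (TTop P1) U" using U unfolding Tc_def by blast+
  have Ut: "U \<subseteq> tight P1" using Tc_sub[OF U] .
  have "compactin (TTop P2) (up ` U)" using image_compactin[OF o(2) up_cont] .
  then have "compactin (TTop P2) (re_pre P1 P2 U)" using re_pre_eq[OF Ut] by simp
  then show ?thesis using re_pre_open[OF o(1)] unfolding Tc_def by blast
qed

lemma re_pre_inv: assumes Ut: "U \<subseteq> tight P1" shows "(\<lambda>\<xi>. \<xi> \<inter> P1) ` re_pre P1 P2 U = U"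
proof -
  have h: "\<forall>E\<in>U. up E \<inter> P1 = E" using up_res Ut tight_sub by blast
  have "(\<lambda>\<xi>. \<xi> \<inter> P1) ` up ` U = (\<lambda>E. E) ` U" unfolding image_image
    by (rule image_cong[OF refl]) (use h in blast)
  then show ?thesis using re_pre_eq[OF Ut] by simp
qed

lemma pfc: "preserves_finite_covers P1 P2"
  unfolding preserves_finite_covers_def
proof (intro ballI allI impI)
  fix x C assume x: "x \<in> P1" and C: "finite_cover P1 x C"
  have "\<forall>y\<in>P2. y \<noteq> bot \<and> y \<le> x \<longrightarrow> (\<exists>c\<in>C. inf y c \<noteq> bot)"
  proof (intro ballI impI)
    fix y assume y: "y \<in> P2" "y \<noteq> bot \<and> y \<le> x"
    then have "y \<in> P1" using dcI[OF x] by blast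
    then show "\<exists>c\<in>C. inf y c \<noteq> bot" using C y unfolding finite_cover_def by blast
  qed
  then show "finite_cover P2 x C" using C sub unfolding finite_cover_def by blast
qed

lemma int_ideal:
  assumes U: "U \<in> Tc P1" and W: "W \<in> Tc P2"
  shows "re_pre P1 P2 U \<inter> W \<in> re_pre P1 P2 ` Tc P1"
proof -
  define A where "A = re_pre P1 P2 U"
  have AT: "A \<in> Tc P2" using Tc_map[OF U] A_def by simp
  have AO: "A \<subseteq> {\<xi>. \<xi> \<inter> P1 \<noteq> {}}" unfolding A_def re_pre_def by blast
  have At: "A \<subseteq> tight P2" unfolding A_def re_pre_def by blast
  have oAW: "openin (TTop P2) (A \<inter> W)" using AT W unfolding Tc_def by (blast intro: openin_Int)
  have cAW: "compactin (TTop P2) (A \<inter> W)"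
    using AT W compactin_Int[OF Hausdorff_TTop] unfolding Tc_def by blast
  define V where "V = (\<lambda>\<xi>. \<xi> \<inter> P1) ` (A \<inter> W)"
  have oV: "openin (TTop P1) V" unfolding V_def using res_open[OF oAW] AO by blast
  have "compactin (subtopology (TTop P2) {\<xi>. \<xi> \<inter> P1 \<noteq> {}}) (A \<inter> W)"
    using cAW AO unfolding compactin_subtopology by blast
  then have cV: "compactin (TTop P1) V" unfolding V_def using image_compactin res_cont by blast
  have eq: "re_pre P1 P2 V = A \<inter> W"
  proof
    show "re_pre P1 P2 V \<subseteq> A \<inter> W"
    proof
      fix \<xi> assume a: "\<xi> \<in> re_pre P1 P2 V"
      then have t: "\<xi> \<in> tight P2" "\<xi> \<inter> P1 \<noteq> {}" "\<xi> \<inter> P1 \<in> V" unfolding re_pre_def by blast+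
      then obtain \<zeta> where z: "\<zeta> \<in> A \<inter> W" "\<xi> \<inter> P1 = \<zeta> \<inter> P1" unfolding V_def by blast
      have zf: "\<zeta> \<in> filters P2" using z(1) At tight_sub by blast
      have xf: "\<xi> \<in> filters P2" using t(1) tight_sub by blast
      have zne: "\<zeta> \<inter> P1 \<noteq> {}" using z(2) t(2) by simp
      have "\<xi> = up (\<xi> \<inter> P1)" using res_up[OF xf t(2)] by simp
      also have "\<dots> = up (\<zeta> \<inter> P1)" using z(2) by simp
      also have "\<dots> = \<zeta>" using res_up[OF zf zne] .
      finally show "\<xi> \<in> A \<inter> W" using z(1) by simp
    qed
    show "A \<inter> W \<subseteq> re_pre P1 P2 V"
    proof
      fix \<xi> assume a: "\<xi> \<in> A \<inter> W"
      then have "\<xi> \<in> tight P2" "\<xi> \<inter> P1 \<noteq> {}" using At AO by blast+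
      moreover have "\<xi> \<inter> P1 \<in> V" unfolding V_def using a by (rule imageI)
      ultimately show "\<xi> \<in> re_pre P1 P2 V" unfolding re_pre_def by blast
    qed
  qed
  have "V \<in> Tc P1" using oV cV unfolding Tc_def by blast
  then have "re_pre P1 P2 V \<in> re_pre P1 P2 ` Tc P1" by (rule imageI)
  then show ?thesis using eq unfolding A_def by simp
qed

lemma ti: "tight_inclusion P1 P2"
  unfolding tight_inclusion_def
proof (intro conjI ballI impI)
  fix \<xi> assume "\<xi> \<in> tight P2" "\<xi> \<inter> P1 \<noteq> {}"
  then show "\<xi> \<inter> P1 \<in> tight P1" by (rule res_tight)
next
  fix U assume "U \<in> Tc P1" then show "re_pre P1 P2 U \<in> Tc P2" by (rule Tc_map)
next
  show "inj_on (re_pre P1 P2) (Tc P1)"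
    by (rule inj_on_inverseI[where g="\<lambda>A. (\<lambda>\<xi>. \<xi> \<inter> P1) ` A"]) (rule re_pre_inv[OF Tc_sub])
next
  fix A B assume A: "A \<in> re_pre P1 P2 ` Tc P1" and B: "B \<in> re_pre P1 P2 ` Tc P1"
  then obtain U V where UV: "U \<in> Tc P1" "V \<in> Tc P1" "A = re_pre P1 P2 U" "B = re_pre P1 P2 V" by blast
  have "U \<union> V \<in> Tc P1" using UV(1,2) unfolding Tc_def by (blast intro: openin_Un compactin_Un)
  moreover have "re_pre P1 P2 (U \<union> V) = A \<union> B" unfolding UV(3,4) re_pre_def by blast
  ultimately show "A \<union> B \<in> re_pre P1 P2 ` Tc P1" by (metis imageI)
next
  fix A W assume A: "A \<in> re_pre P1 P2 ` Tc P1" and W: "W \<in> Tc P2"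
  then obtain U where "U \<in> Tc P1" "A = re_pre P1 P2 U" by blast
  then show "A \<inter> W \<in> re_pre P1 P2 ` Tc P1" using int_ideal W by simp
qed

lemma Vbas_eq: assumes x: "x \<in> P1" shows "re_pre P1 P2 (Vbas P1 x {}) = Vbas P2 x {}"
proof (rule set_eqI)
  fix \<xi>
  show "\<xi> \<in> re_pre P1 P2 (Vbas P1 x {}) \<longleftrightarrow> \<xi> \<in> Vbas P2 x {}"
  proof (cases "\<xi> \<in> tight P2")
    case False then show ?thesis unfolding re_pre_def Vbas_def by blast
  next
    case True
    have \<xi>f: "\<xi> \<in> filters P2" using True tight_sub by blast
    have "\<xi> \<in> Ubas P2 x {} \<longleftrightarrow> \<xi> \<inter> P1 \<noteq> {} \<and> \<xi> \<inter> P1 \<in> Ubas P1 x {}" using res_Ubas[OF \<xi>f x] by blast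
    moreover have "\<xi> \<inter> P1 \<noteq> {} \<Longrightarrow> \<xi> \<inter> P1 \<in> tight P1" using res_tight True by blast
    ultimately show ?thesis unfolding re_pre_def Vbas_def using True by blast
  qed
qed

end

theorem mainTheorem10:
  fixes P1 P2 :: "'a::{semilattice_inf,order_bot} set"
  assumes "msl0 P1" and "msl0 P2" and "P1 \<subseteq> P2" and "down_closed P1 P2"
  shows "preserves_finite_covers P1 P2 \<and> tight_inclusion P1 P2
         \<and> (\<forall>x\<in>P1. re_pre P1 P2 (Vbas P1 x {}) = Vbas P2 x {})"
proof -
  interpret I: incl P1 P2 by (rule incl.intro) (rule assms)+
  show ?thesis using I.pfc I.ti I.Vbas_eq by blast
qed

end
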